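(* Consider the reputation-based proportional-share reverse auction with ex-post payments described in the context, with budget $B>0$, worker set $U$, arbitrary bids $b_i\ge 0$, reputations $Re_i\in(0,1]$ and internal reputations $re_i\in[0,1]$. Then the total payment does not exceed the budget: $\sum_{i\in U}p_i=\sum_{i\in S}p_i\le B$.
   Context: Setting. A task publisher with budget $B>0$ faces a finite set $U$ of workers. Each worker $i\in U$ has a public accumulated reputation $Re_i\in(0,1]$ and submits a sealed bid $b_i\ge 0$. After the task, each selected worker $i$ receives an internal reputation $re_i\in[0,1]$. Mechanism. (1) Sort the workers so that $\frac{b_1}{Re_1}\le\dots\le\frac{b_{|U|}}{Re_{|U|}}$ (ties broken arbitrarily). (2) Starting with $S=\emptyset$ and $i=1$, while $i\le|U|$ and $\frac{b_i}{Re_i}\le \frac{B}{Re_i+\sum_{j\in S}Re_j}$, set $S=S\cup\{i\}$ and $i=i+1$. Let $k=|S|$. (3) Define $\rho^*=\min\left(\frac{b_{k+1}}{Re_{k+1}},\frac{B}{\sum_{j\in S}Re_j}\right)$ (with $\frac{b_{k+1}}{Re_{k+1}}:=+\infty$ if $k=|U|$). (4) Every $i\notin S$ is paid $p_i=0$; every $i\in S$ has $p_i^{up}=Re_i\rho^*$. (5) After the task, each $i\in S$ gets $p_i'=\max\left(\frac{B\, re_i}{\sum_{j\in S}re_j},\ \rho^* re_i\right)$ and final payment $p_i=\min(p_i^{up},p_i')$. *)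

theory Defs
  imports Main Complex_Main
begin

text \<open>The list is the workers in the sorted order;
  acc is the sum of the accumulated reputations of the already selected workers.\<close>
fun select_winners :: "real \<Rightarrow> ('a \<Rightarrow> real) \<Rightarrow> ('a \<Rightarrow> real) \<Rightarrow> real \<Rightarrow> 'a list \<Rightarrow> 'a list" where
  "select_winners B b Rep acc [] = []"
| "select_winners B b Rep acc (x # xs) =
     (if b x / Rep x \<le> B / (Rep x + acc)
      then x # select_winners B b Rep (acc + Rep x) xs else [])"

definition winners :: "real \<Rightarrow> ('a \<Rightarrow> real) \<Rightarrow> ('a \<Rightarrow> real) \<Rightarrow> 'a list \<Rightarrow> 'a set" where
  "winners B b Rep ws = set (select_winners B b Rep 0 ws)"

text \<open>Threshold price rho* (step 3); if all workers are selected the first argument of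
  the min is +infinity, so rho* = B / sum of Rep over S.\<close>
definition rho_star :: "real \<Rightarrow> ('a \<Rightarrow> real) \<Rightarrow> ('a \<Rightarrow> real) \<Rightarrow> 'a list \<Rightarrow> real" where
  "rho_star B b Rep ws =
     (let k = length (select_winners B b Rep 0 ws);
          S = winners B b Rep ws
      in if k < length ws then min (b (ws ! k) / Rep (ws ! k)) (B / (\<Sum>j\<in>S. Rep j))
         else B / (\<Sum>j\<in>S. Rep j))"

definition payment :: "real \<Rightarrow> ('a \<Rightarrow> real) \<Rightarrow> ('a \<Rightarrow> real) \<Rightarrow> ('a \<Rightarrow> real) \<Rightarrow> 'a list \<Rightarrow> 'a \<Rightarrow> real" where
  "payment B b Rep re ws i =
     (let S = winners B b Rep ws; \<rho> = rho_star B b Rep ws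
      in if i \<in> S then
           min (Rep i * \<rho>) (max (B * re i / (\<Sum>j\<in>S. re j)) (\<rho> * re i))
         else 0)"

end

theory Submission
  imports Defs
begin

lemma sel_subset: "set (select_winners B b Rep acc xs) \<subseteq> set xs"
  by (induction xs arbitrary: acc) auto

theorem theorem2:
  fixes B :: real and U :: "'a set" and b Rep re :: "'a \<Rightarrow> real" and ws :: "'a list"
  assumes "B > 0"
    and "finite U"
    and "\<forall>i\<in>U. 0 < Rep i \<and> Rep i \<le> 1"
    and "\<forall>i\<in>U. b i \<ge> 0"
    and "\<forall>i\<in>U. 0 \<le> re i \<and> re i \<le> 1"
    and "distinct ws" and "set ws = U"
    and "sorted_wrt (\<lambda>i j. b i / Rep i \<le> b j / Rep j) ws"
  shows "(\<Sum>i\<in>U. payment B b Rep re ws i) = (\<Sum>i\<in>winners B b Rep ws. payment B b Rep re ws i)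
       \<and> (\<Sum>i\<in>winners B b Rep ws. payment B b Rep re ws i) \<le> B"
proof
  define S where "S = winners B b Rep ws"
  define \<rho> where "\<rho> = rho_star B b Rep ws"
  have SU: "S \<subseteq> U" using sel_subset[of B b Rep 0 ws] assms(7) unfolding S_def winners_def by simp
  have fS: "finite S" using SU assms(2) finite_subset by blast
  show "(\<Sum>i\<in>U. payment B b Rep re ws i) = (\<Sum>i\<in>winners B b Rep ws. payment B b Rep re ws i)"
    by (rule sum.mono_neutral_right[OF assms(2) SU[unfolded S_def]])
       (auto simp: payment_def)
  have rho_le: "\<rho> \<le> B / (\<Sum>j\<in>S. Rep j)"
    unfolding \<rho>_def rho_star_def S_def Let_def by auto
  have "(\<Sum>i\<in>S. payment B b Rep re ws i) \<le> (\<Sum>i\<in>S. Rep i * \<rho>)"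
    by (rule sum_mono) (auto simp: payment_def S_def \<rho>_def Let_def)
  also have "\<dots> = (\<Sum>i\<in>S. Rep i) * \<rho>" by (simp add: sum_distrib_right)
  also have "\<dots> \<le> B"
  proof (cases "S = {}")
    case True then show ?thesis using assms(1) by simp
  next
    case False
    have "(\<Sum>i\<in>S. Rep i) > 0"
      using sum_pos[OF fS False] SU assms(3) by blast
    then show ?thesis using rho_le by (simp add: field_simps mult.commute)
  qed
  finally show "(\<Sum>i\<in>winners B b Rep ws. payment B b Rep re ws i) \<le> B" unfolding S_def .
qed

end
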